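(* Let $r>0$ be the maximum range, and let $d_s$ and $\theta_s$ be parameters with $0\le d_s\le 2r$ and $0^\circ\le\theta_s\le 60^\circ$. Let $Q_i,Q_j,Q_k\in\mathbb{R}^2$ be the locations of a triplet of reference nodes (with parameters $d_s,\theta_s$), forming the triangle $q=\triangle Q_iQ_jQ_k$. Let $U\in\mathbb{R}^2$, $U\notin\{Q_i,Q_j,Q_k\}$, be the position of a user terminal that has LoS conditions to all three nodes, in particular $\|UQ_i\|,\|UQ_j\|,\|UQ_k\|\le r$. Let $\theta_E$ be the effective visibility angle of $U$. Then $$|90^\circ-\theta_E|\le 90^\circ-\theta_s\quad\text{if } U \text{ lies inside } q,$$ and $$|90^\circ-\theta_E|\le 90^\circ-2\arctan\!\Big(\frac{d_s}{2r}\tan\big(\tfrac{\theta_s}{2}\big)\Big)\quad\text{if } U \text{ lies outside } q.$$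
   Context: A triplet of reference nodes with minimum separation distance $d_s$ and minimum separation angle $\theta_s$ is a set of three points $Q_i,Q_j,Q_k$ that are the vertices of a triangle $q$ such that all three side lengths of $q$ are at least $d_s$ and all three interior angles $\hat Q_i,\hat Q_j,\hat Q_k$ of $q$ are at least $\theta_s$. For a point $U$, the (non-reflex) visibility angles are $\theta_{ij}=\angle Q_iUQ_j$, $\theta_{ik}=\angle Q_iUQ_k$, $\theta_{jk}=\angle Q_jUQ_k$, each taken in $[0^\circ,180^\circ]$. The effective visibility angle (EVA) $\theta_E$ of $U$ is the one among $\theta_{ij},\theta_{ik},\theta_{jk}$ that is closest to $90^\circ$, i.e. minimizes $|90^\circ-\theta|$. *)

theory Defs
  imports "HOL-Analysis.Analysis"
begin

text \<open>Angles are measured in radians: 90 degrees = pi/2, 60 degrees = pi/3.\<close>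

definition vangle :: "real^2 \<Rightarrow> real^2 \<Rightarrow> real" where
  "vangle u v = arccos ((u \<bullet> v) / (norm u * norm v))"

definition angle3 :: "real^2 \<Rightarrow> real^2 \<Rightarrow> real^2 \<Rightarrow> real" where
  "angle3 A B C = vangle (A - B) (C - B)"

definition ref_triplet :: "real \<Rightarrow> real \<Rightarrow> real^2 \<Rightarrow> real^2 \<Rightarrow> real^2 \<Rightarrow> bool" where
  "ref_triplet ds ths Qi Qj Qk \<longleftrightarrow>
     \<not> collinear {Qi, Qj, Qk} \<and>
     dist Qi Qj \<ge> ds \<and> dist Qi Qk \<ge> ds \<and> dist Qj Qk \<ge> ds \<and>
     angle3 Qj Qi Qk \<ge> ths \<and> angle3 Qi Qj Qk \<ge> ths \<and> angle3 Qi Qk Qj \<ge> ths"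

definition eva :: "real^2 \<Rightarrow> real^2 \<Rightarrow> real^2 \<Rightarrow> real^2 \<Rightarrow> real" where
  "eva U Qi Qj Qk =
     (let tij = angle3 Qi U Qj; tik = angle3 Qi U Qk; tjk = angle3 Qj U Qk in
      if \<bar>pi/2 - tij\<bar> \<le> \<bar>pi/2 - tik\<bar> \<and> \<bar>pi/2 - tij\<bar> \<le> \<bar>pi/2 - tjk\<bar> then tij
      else if \<bar>pi/2 - tik\<bar> \<le> \<bar>pi/2 - tjk\<bar> then tik else tjk)"

end

theory Submission
  imports Defs
begin

definition cr :: "real^2 \<Rightarrow> real^2 \<Rightarrow> real" where
  "cr u v = u$1 * v$2 - u$2 * v$1"

lemma inner2: "(u::real^2) \<bullet> v = u$1 * v$1 + u$2 * v$2"
  by (simp add: inner_vec_def sum_2)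

lemma normsq2: "(norm (u::real^2))^2 = (u$1)^2 + (u$2)^2"
  unfolding power2_norm_eq_inner inner2 by (simp add: power2_eq_square)

lemma lagrange: "(u \<bullet> v)^2 + (cr u v)^2 = (norm u)^2 * (norm (v::real^2))^2"
  unfolding normsq2 inner2 cr_def by (simp add: power2_eq_square algebra_simps)

lemma cr_simps: "cr (u + v) w = cr u w + cr v w" "cr w (u + v) = cr w u + cr w v"
  "cr (u - v) w = cr u w - cr v w" "cr w (u - v) = cr w u - cr w v"
  "cr (c *\<^sub>R u) w = c * cr u w" "cr w (c *\<^sub>R u) = c * cr w u"
  "cr u u = 0" "cr v u = - cr u v"
  by (simp_all add: cr_def algebra_simps)

lemma ptolemy: "norm e * \<bar>cr v w\<bar> \<le> \<bar>cr e w\<bar> * norm v + \<bar>cr e v\<bar> * norm w"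
proof -
  have "cr v w *\<^sub>R e = cr e w *\<^sub>R v - cr e v *\<^sub>R w"
    by (simp add: vec_eq_iff forall_2 cr_def algebra_simps)
  then have "norm (cr v w *\<^sub>R e) \<le> norm (cr e w *\<^sub>R v) + norm (cr e v *\<^sub>R w)"
    by (metis norm_triangle_ineq4)
  then show ?thesis by (simp add: mult.commute)
qed

lemma split_id: "((u::real^2) \<bullet> v) * (norm w)^2 = (u \<bullet> w) * (w \<bullet> v) + cr w u * cr w v"
  unfolding normsq2 inner2 cr_def by (simp add: power2_eq_square algebra_simps)


lemma cot_cmp:
  fixes Na Nb da db xa xb :: real
  assumes Na: "Na > 0" and Nb: "Nb > 0" and e1: "Na^2 = da^2 + xa^2" and e2: "Nb^2 = db^2 + xb^2"
    and nz: "xa \<noteq> 0 \<or> xb \<noteq> 0" and c: "db * \<bar>xa\<bar> \<le> da * \<bar>xb\<bar>"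
  shows "db / Nb \<le> da / Na"
proof -
  have key: "db * Na \<le> da * Nb"
  proof (cases "db \<le> 0")
    case True
    show ?thesis
    proof (cases "da \<ge> 0")
      case True
      have "db * Na \<le> 0" using \<open>db \<le> 0\<close> Na by (simp add: mult_nonpos_nonneg)
      moreover have "0 \<le> da * Nb" using True Nb by simp
      ultimately show ?thesis by linarith
    next
      case False
      have "(- da) * \<bar>xb\<bar> \<le> (- db) * \<bar>xa\<bar>" using c by linarith
      moreover have "0 \<le> (- da) * \<bar>xb\<bar>" using False by (simp add: mult_nonpos_nonneg)
      ultimately have "((- da) * \<bar>xb\<bar>)^2 \<le> ((- db) * \<bar>xa\<bar>)^2"
        by (rule power_mono)
      then have h: "da^2 * xb^2 \<le> db^2 * xa^2" by (simp add: power_mult_distrib)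
      have "(da * Nb)^2 = da^2 * db^2 + da^2 * xb^2" by (simp add: power_mult_distrib e2 algebra_simps)
      moreover have "(db * Na)^2 = da^2 * db^2 + db^2 * xa^2" by (simp add: power_mult_distrib e1 algebra_simps)
      ultimately have "(- (da * Nb))^2 \<le> (- (db * Na))^2" using h by simp
      moreover have "0 \<le> - (db * Na)" using True Na by (simp add: mult_nonpos_nonneg)
      ultimately have "- (da * Nb) \<le> - (db * Na)" by (rule power2_le_imp_le)
      then show ?thesis by linarith
    qed
  next
    case False
    then have dbp: "db > 0" by simp
    have dap: "da > 0"
    proof (cases "xa = 0")
      case True
      then have "xb \<noteq> 0" using nz by simp
      have "da \<noteq> 0" using True Na e1 by auto
      moreover have "0 \<le> da * \<bar>xb\<bar>" using c True by simp
      moreover have "\<bar>xb\<bar> > 0" using \<open>xb \<noteq> 0\<close> by simp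
      moreover have "0 \<le> da" using \<open>0 \<le> da * \<bar>xb\<bar>\<close> \<open>\<bar>xb\<bar> > 0\<close> by (simp add: zero_le_mult_iff)
      ultimately show ?thesis by linarith
    next
      case False
      have "0 < db * \<bar>xa\<bar>" using False dbp by simp
      then have "0 < da * \<bar>xb\<bar>" using c by linarith
      then show ?thesis by (simp add: zero_less_mult_iff)
    qed
    have "0 \<le> db * \<bar>xa\<bar>" using dbp by simp
    then have "(db * \<bar>xa\<bar>)^2 \<le> (da * \<bar>xb\<bar>)^2" using c by (rule power_mono[rotated])
    then have h: "db^2 * xa^2 \<le> da^2 * xb^2" by (simp add: power_mult_distrib)
    have "(da * Nb)^2 = da^2 * db^2 + da^2 * xb^2" by (simp add: power_mult_distrib e2 algebra_simps)
    moreover have "(db * Na)^2 = da^2 * db^2 + db^2 * xa^2" by (simp add: power_mult_distrib e1 algebra_simps)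
    ultimately have "(db * Na)^2 \<le> (da * Nb)^2" using h by simp
    moreover have "0 \<le> da * Nb" using dap Nb by simp
    ultimately show ?thesis by (rule power2_le_imp_le)
  qed
  then show ?thesis using Na Nb by (simp add: field_simps)
qed


definition nc :: "real^2 \<Rightarrow> real^2 \<Rightarrow> real" where
  "nc u v = (u \<bullet> v) / (norm u * norm v)"
definition ns :: "real^2 \<Rightarrow> real^2 \<Rightarrow> real" where
  "ns u v = \<bar>cr u v\<bar> / (norm u * norm v)"

lemma nc_commute: "nc u v = nc v u"
  by (simp add: nc_def inner_commute mult.commute)

lemma ns_nonneg: "ns u v \<ge> 0" by (simp add: ns_def)

lemma nc_ns: assumes "u \<noteq> 0" "v \<noteq> 0" shows "(nc u v)^2 + (ns u v)^2 = 1"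
proof -
  have "(u \<bullet> v)^2 + (cr u v)^2 = (norm u * norm v)^2" using lagrange by (simp add: power_mult_distrib)
  moreover have "norm u * norm v \<noteq> 0" using assms by simp
  ultimately show ?thesis unfolding nc_def ns_def
    by (simp add: power_divide field_simps)
qed

lemma nc_split:
  assumes "u \<noteq> 0" "v \<noteq> 0" "w \<noteq> 0" and s: "cr w u * cr w v \<le> 0"
  shows "nc u v = nc u w * nc w v - ns u w * ns w v"
proof -
  have a: "\<bar>cr u w\<bar> = \<bar>cr w u\<bar>" using cr_simps(8)[of w u] by simp
  have b: "cr w u * cr w v = - (\<bar>cr w u\<bar> * \<bar>cr w v\<bar>)"
    using s by (simp add: abs_mult[symmetric] abs_of_nonpos)
  have c: "(u \<bullet> v) * (norm w)^2 = (u \<bullet> w) * (w \<bullet> v) - \<bar>cr u w\<bar> * \<bar>cr w v\<bar>"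
    using split_id[of u v w] a b by simp
  have nz: "norm u \<noteq> 0" "norm v \<noteq> 0" "norm w \<noteq> 0" using assms by auto
  show ?thesis unfolding nc_def ns_def using nz c
    by (simp add: field_simps power2_eq_square)
qed

lemma nc_bound: "\<bar>nc u v\<bar> \<le> 1"
proof (cases "u = 0 \<or> v = 0")
  case True then show ?thesis by (auto simp: nc_def)
next
  case False
  have "\<bar>u \<bullet> v\<bar> \<le> norm u * norm v" by (rule Cauchy_Schwarz_ineq2)
  then show ?thesis using False by (simp add: nc_def abs_div divide_le_eq_1)
qed

lemma cos_vangle: "cos (vangle u v) = nc u v"
  unfolding vangle_def nc_def[symmetric] using nc_bound[of u v] by (simp add: abs_le_iff)

lemma vangle_range: "0 \<le> vangle u v" "vangle u v \<le> pi"
  unfolding vangle_def nc_def[symmetric] using nc_bound[of u v]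
  by (simp_all add: arccos_lbound arccos_ubound abs_le_iff)

lemma nc_cmp:
  assumes "u1 \<noteq> 0" "v1 \<noteq> 0" "u2 \<noteq> 0" "v2 \<noteq> 0" "cr u1 v1 \<noteq> 0 \<or> cr u2 v2 \<noteq> 0"
    and "(u2 \<bullet> v2) * \<bar>cr u1 v1\<bar> \<le> (u1 \<bullet> v1) * \<bar>cr u2 v2\<bar>"
  shows "nc u2 v2 \<le> nc u1 v1"
  unfolding nc_def
  apply (rule cot_cmp[where xa="cr u1 v1" and xb="cr u2 v2"])
  using assms lagrange[of u1 v1] lagrange[of u2 v2] by (auto simp: power_mult_distrib)


lemma normsq_inner: "(norm (u::real^2))^2 = u$1*u$1 + u$2*u$2"
  using normsq2[of u] by (simp add: power2_eq_square)

lemma ins: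
  fixes A B C U :: "real^2" and al be ga :: real
  assumes X: "cr (A - C) (B - C) \<noteq> 0" and pos: "al \<ge> 0" "be \<ge> 0" "ga \<ge> 0" and s: "al + be + ga = 1"
    and U: "U = al *\<^sub>R A + be *\<^sub>R B + ga *\<^sub>R C" and nA: "U \<noteq> A" and nB: "U \<noteq> B"
  shows "nc (A - U) (B - U) \<le> nc (A - C) (B - C)"
proof -
  have ga: "ga = 1 - al - be" using s by simp
  have U1: "U$1 = al * A$1 + be * B$1 + ga * C$1" and U2: "U$2 = al * A$2 + be * B$2 + ga * C$2"
    using U by simp_all
  have crU: "cr (A - U) (B - U) = ga * cr (A - C) (B - C)"
    unfolding cr_def vector_minus_component U1 U2 unfolding ga by (simp add: algebra_simps)
  have dU: "ga * ((A - C) \<bullet> (B - C)) - (A - U) \<bullet> (B - U) =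
      al * be * (norm (A - B))^2 + be * ga * (norm (B - C))^2 + ga * al * (norm (A - C))^2"
    unfolding normsq_inner inner2 vector_minus_component U1 U2 unfolding ga by (simp add: algebra_simps)
  have S: "0 \<le> al * be * (norm (A - B))^2 + be * ga * (norm (B - C))^2 + ga * al * (norm (A - C))^2"
    using pos by simp
  have "((A - U) \<bullet> (B - U)) * \<bar>cr (A - C) (B - C)\<bar> \<le> ((A - C) \<bullet> (B - C)) * \<bar>cr (A - U) (B - U)\<bar>"
  proof -
    have "\<bar>cr (A - U) (B - U)\<bar> = ga * \<bar>cr (A - C) (B - C)\<bar>" using crU pos by (simp add: abs_mult)
    moreover have "(A - U) \<bullet> (B - U) \<le> ga * ((A - C) \<bullet> (B - C))" using dU S by linarith
    moreover have "((A - U) \<bullet> (B - U)) * \<bar>cr (A - C) (B - C)\<bar> \<le> (ga * ((A - C) \<bullet> (B - C))) * \<bar>cr (A - C) (B - C)\<bar>"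
      using calculation(2) by (rule mult_right_mono) simp
    ultimately show ?thesis by (simp add: mult_ac)
  qed
  moreover have "A - C \<noteq> 0" "B - C \<noteq> 0" using X by (auto simp: cr_def)
  moreover have "A - U \<noteq> 0" "B - U \<noteq> 0" using nA nB by auto
  ultimately show ?thesis using X by (intro nc_cmp) auto
qed

lemma sum_nc: assumes "e1 \<noteq> 0" "e2 \<noteq> 0" "e3 \<noteq> 0"
  shows "nc e1 e2 + nc e1 e3 + nc e2 e3 \<ge> -3/2"
proof -
  define x y z where "x = e1 /\<^sub>R norm e1" and "y = e2 /\<^sub>R norm e2" and "z = e3 /\<^sub>R norm e3"
  have xx: "x \<bullet> x = 1" "y \<bullet> y = 1" "z \<bullet> z = 1" using assms
    by (simp_all add: x_def y_def z_def dot_square_norm power2_eq_square)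
  have n: "nc e1 e2 = x \<bullet> y" "nc e1 e3 = x \<bullet> z" "nc e2 e3 = y \<bullet> z"
    by (simp_all add: nc_def x_def y_def z_def field_simps)
  have "0 \<le> (x + y + z) \<bullet> (x + y + z)" by simp
  also have "\<dots> = x \<bullet> x + y \<bullet> y + z \<bullet> z + 2 * (x \<bullet> y + x \<bullet> z + y \<bullet> z)"
    by (simp add: inner_add_left inner_add_right inner_commute algebra_simps)
  finally show ?thesis using xx n by simp
qed


lemma ii:
  fixes e1 e2 :: "real^2" and mu nu :: real
  defines "e3 \<equiv> mu *\<^sub>R e1 + nu *\<^sub>R e2"
  assumes n1: "e1 \<noteq> 0" and n3: "e3 \<noteq> 0" and mu: "mu \<ge> 0" and nu: "nu \<ge> 0"
    and X: "cr (e2 - e1) (e3 - e1) \<noteq> 0"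
  shows "- (((e2 - e1) \<bullet> (e3 - e1)) / (norm (e2 - e1) * norm (e3 - e1))) \<le> nc e1 e3"
proof -
  define s where "s = 1 - mu - nu"
  have c1: "e3$1 = mu * e1$1 + nu * e2$1" "e3$2 = mu * e1$2 + nu * e2$2" by (simp_all add: e3_def)
  have cr13: "cr e1 e3 = nu * cr e1 e2" unfolding cr_def c1 by (simp add: algebra_simps)
  have crX: "cr (e1 - e2) (e3 - e1) = - (s * cr e1 e2)"
    unfolding cr_def vector_minus_component c1 s_def by (simp add: algebra_simps)
  define mA where "mA = (e2 - e1) \<bullet> (e3 - e1)"
  have Q: "0 \<le> (e1 \<bullet> e3) * \<bar>s\<bar> + nu * mA"
  proof (cases "s \<ge> 0")
    case True
    have "(e1 \<bullet> e3) * s + nu * mA = s * (1 - s) * (norm e1)^2 + nu^2 * (norm (e2 - e1))^2"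
      unfolding mA_def normsq_inner inner2 vector_minus_component c1 s_def
      by (simp add: algebra_simps power2_eq_square)
    moreover have "0 \<le> s * (1 - s)" using True mu nu s_def by simp
    ultimately show ?thesis using True by simp
  next
    case False
    have "(e1 \<bullet> e3) * (- s) + nu * mA = (norm (e3 - e1))^2 - s * (norm e1)^2"
      unfolding mA_def normsq_inner inner2 vector_minus_component c1 s_def
      by (simp add: algebra_simps power2_eq_square)
    moreover have "0 \<le> - s * (norm e1)^2" using False by (simp add: mult_nonpos_nonneg)
    moreover have "0 \<le> (norm (e3 - e1))^2" by simp
    moreover have "\<bar>s\<bar> = - s" using False by simp
    ultimately show ?thesis by (simp only:)
  qed
  have cond: "((e1 - e2) \<bullet> (e3 - e1)) * \<bar>cr e1 e3\<bar> \<le> (e1 \<bullet> e3) * \<bar>cr (e1 - e2) (e3 - e1)\<bar>"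
  proof -
    have "(e1 \<bullet> e3) * \<bar>cr (e1 - e2) (e3 - e1)\<bar> - ((e1 - e2) \<bullet> (e3 - e1)) * \<bar>cr e1 e3\<bar>
        = \<bar>cr e1 e2\<bar> * ((e1 \<bullet> e3) * \<bar>s\<bar> + nu * mA)"
      unfolding crX cr13 mA_def using nu
      by (simp add: abs_mult inner_diff_left algebra_simps)
    moreover have "0 \<le> \<bar>cr e1 e2\<bar> * ((e1 \<bullet> e3) * \<bar>s\<bar> + nu * mA)" using Q by simp
    ultimately show ?thesis by linarith
  qed
  have "e1 - e2 \<noteq> 0" "e3 - e1 \<noteq> 0" using X by (auto simp: cr_def)
  then have "nc (e1 - e2) (e3 - e1) \<le> nc e1 e3"
    using n1 n3 X cond cr_simps(3)[of e1 e2 "e3 - e1"] cr_simps(3)[of e2 e1 "e3 - e1"] by (intro nc_cmp) auto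
  moreover have "nc (e1 - e2) (e3 - e1) = - (((e2 - e1) \<bullet> (e3 - e1)) / (norm (e2 - e1) * norm (e3 - e1)))"
  proof -
    have "e1 - e2 = -(e2 - e1)" by simp
    then show ?thesis unfolding nc_def by (simp only: inner_minus_left norm_minus_cancel divide_minus_left)
  qed
  ultimately show ?thesis by simp
qed


lemma halfcot:
  fixes Bb m X T k :: real
  assumes Bb: "Bb > 0" and m: "m \<le> k * Bb" and l: "m^2 + X^2 = Bb^2" and X: "X \<ge> 0"
    and T: "T \<ge> 0" and Tk: "T^2 * (1 + k) = 1 - k" and k: "k > -1"
  shows "(Bb + m) * T \<le> X"
proof -
  have "m^2 \<le> Bb^2" using l by (smt (verit) zero_le_power2)
  then have "\<bar>m\<bar> \<le> Bb" using Bb by (simp add: abs_le_square_iff[symmetric] abs_of_pos)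
  then have bm: "Bb + m \<ge> 0" "Bb - m \<ge> 0" by linarith+
  have h1: "(Bb + m) * (1 - k) \<le> (Bb - m) * (1 + k)" using m by (simp add: algebra_simps)
  have "((Bb + m) * T)^2 * (1 + k) = (Bb + m)^2 * (T^2 * (1 + k))"
    by (simp add: power_mult_distrib mult.assoc)
  also have "\<dots> = (Bb + m) * ((Bb + m) * (1 - k))"
    unfolding Tk by (simp add: power2_eq_square)
  also have "\<dots> \<le> (Bb + m) * ((Bb - m) * (1 + k))" using mult_left_mono[OF h1 bm(1)] .
  also have "\<dots> = (Bb^2 - m^2) * (1 + k)" by (simp add: power2_eq_square algebra_simps)
  also have "\<dots> = X^2 * (1 + k)" using l by simp
  finally have "((Bb + m) * T)^2 \<le> X^2" using k by simp
  then show ?thesis using X by (rule power2_le_imp_le)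
qed

lemma final_alg:
  fixes c1 c2 s1 s2 t :: real
  assumes "c1^2 + s1^2 = 1" "c2^2 + s2^2 = 1" "s1 \<ge> t" "s2 \<ge> t" "t \<ge> 0"
  shows "c1 * c2 - s1 * s2 \<le> 1 - 2 * t^2"
proof -
  have "0 \<le> (c1 - c2)^2" by simp
  then have a: "c1 * c2 \<le> (c1^2 + c2^2) / 2" by (simp add: power2_eq_square algebra_simps)
  have "2 * t \<le> s1 + s2" using assms by linarith
  then have "(2 * t)^2 \<le> (s1 + s2)^2" using assms by (intro power_mono) auto
  then show ?thesis using a assms by (simp add: power2_eq_square algebra_simps)
qed


lemma iii:
  fixes e1 e2 :: "real^2" and mu nu r ds k T :: real
  defines "e3 \<equiv> mu *\<^sub>R e1 + nu *\<^sub>R e2"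
  assumes n1: "e1 \<noteq> 0" and n2: "e2 \<noteq> 0" and mu: "mu \<ge> 0" and nu: "nu \<ge> 0"
    and X: "cr (e2 - e1) (e3 - e1) \<noteq> 0"
    and r1: "norm e1 \<le> r" and r2: "norm e2 \<le> r" and r3: "norm e3 \<le> r"
    and ds0: "0 \<le> ds" and dsc: "ds \<le> norm (e2 - e1)"
    and angA: "(e2 - e1) \<bullet> (e3 - e1) \<le> k * (norm (e2 - e1) * norm (e3 - e1))"
    and angB: "(e1 - e2) \<bullet> (e3 - e2) \<le> k * (norm (e1 - e2) * norm (e3 - e2))"
    and T: "T \<ge> 0" and Tk: "T^2 * (1 + k) = 1 - k" and k: "k > -1" and r: "r > 0"
  shows "nc e1 e2 \<le> 1 - 2 * (ds * T / (2 * r))^2"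
proof -
  define a b c where "a = norm (e3 - e2)" and "b = norm (e3 - e1)" and "c = norm (e2 - e1)"
  define Xa where "Xa = \<bar>cr (e2 - e1) (e3 - e1)\<bar>"
  have Xa: "Xa > 0" using X by (simp add: Xa_def)
  have c1: "e3$1 = mu * e1$1 + nu * e2$1" "e3$2 = mu * e1$2 + nu * e2$2" by (simp_all add: e3_def)
  have abc: "a \<ge> 0" "b \<ge> 0" "c \<ge> 0" by (simp_all add: a_def b_def c_def)
  have nz: "e2 - e1 \<noteq> 0" "e3 - e1 \<noteq> 0" "e3 - e2 \<noteq> 0"
  proof -
    show "e2 - e1 \<noteq> 0" using X by (auto simp: cr_def)
    show "e3 - e1 \<noteq> 0" using X by (auto simp: cr_def)
    show "e3 - e2 \<noteq> 0"
    proof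
      assume "e3 - e2 = 0"
      then have "e3 = e2" by simp
      then show False using X by (simp add: cr_def)
    qed
  qed
  have cpos: "c > 0" "b > 0" "a > 0" using nz by (simp_all add: a_def b_def c_def)
  \<comment> \<open>inradius estimate\<close>
  have hA: "(c * b + (e2 - e1) \<bullet> (e3 - e1)) * T \<le> Xa"
  proof (rule halfcot[OF _ _ _ _ T Tk k])
    show "c * b > 0" using cpos by simp
    show "(e2 - e1) \<bullet> (e3 - e1) \<le> k * (c * b)" using angA by (simp add: c_def b_def)
    show "((e2 - e1) \<bullet> (e3 - e1))^2 + Xa^2 = (c * b)^2"
      using lagrange[of "e2 - e1" "e3 - e1"] by (simp add: Xa_def c_def b_def power_mult_distrib)
    show "Xa \<ge> 0" using Xa by simp
  qed
  have crB: "cr (e1 - e2) (e3 - e2) = - cr (e2 - e1) (e3 - e1)" by (simp add: cr_def algebra_simps)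
  have hB: "(c * a + (e1 - e2) \<bullet> (e3 - e2)) * T \<le> Xa"
  proof (rule halfcot[OF _ _ _ _ T Tk k])
    show "c * a > 0" using cpos by simp
    show "(e1 - e2) \<bullet> (e3 - e2) \<le> k * (c * a)" using angB by (simp add: c_def a_def norm_minus_commute)
    show "((e1 - e2) \<bullet> (e3 - e2))^2 + Xa^2 = (c * a)^2"
      using lagrange[of "e1 - e2" "e3 - e2"] crB
      by (simp add: Xa_def c_def a_def power_mult_distrib norm_minus_commute)
    show "Xa \<ge> 0" using Xa by simp
  qed
  have msum: "(e2 - e1) \<bullet> (e3 - e1) + (e1 - e2) \<bullet> (e3 - e2) = c^2"
    unfolding c_def normsq_inner inner2 by (simp add: algebra_simps)
  have inr: "T * c * (a + b + c) \<le> 2 * Xa"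
  proof -
    define mA mB where "mA = (e2 - e1) \<bullet> (e3 - e1)" and "mB = (e1 - e2) \<bullet> (e3 - e2)"
    have ms: "mA + mB = c^2" using msum by (simp add: mA_def mB_def)
    have "(c * b + mA) * T + (c * a + mB) * T = T * (c * b + c * a + (mA + mB))"
      by (simp add: algebra_simps)
    also have "\<dots> = T * c * (a + b + c)" unfolding ms by (simp add: power2_eq_square algebra_simps)
    finally show ?thesis using hA hB unfolding mA_def[symmetric] mB_def[symmetric] by linarith
  qed
  define P where "P = a + b + c"
  have Ppos: "P > 0" using cpos abc by (simp add: P_def)
  define eI where "eI = a *\<^sub>R e1 + b *\<^sub>R e2 + c *\<^sub>R e3"
  have nI: "norm eI \<le> P * r"
  proof -
    have "norm eI \<le> norm (a *\<^sub>R e1) + norm (b *\<^sub>R e2) + norm (c *\<^sub>R e3)"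
      unfolding eI_def using norm_triangle_ineq[of "a *\<^sub>R e1 + b *\<^sub>R e2" "c *\<^sub>R e3"]
        norm_triangle_ineq[of "a *\<^sub>R e1" "b *\<^sub>R e2"] by linarith
    also have "\<dots> = a * norm e1 + b * norm e2 + c * norm e3" using abc by simp
    also have "\<dots> \<le> a * r + b * r + c * r"
      using abc r1 r2 r3 by (intro add_mono mult_left_mono) auto
    finally show ?thesis by (simp add: P_def algebra_simps)
  qed
  define c12 where "c12 = cr e1 e2"
  have crI1: "cr e1 eI = (b + c * nu) * c12"
    unfolding cr_def eI_def c12_def by (simp add: c1 algebra_simps)
  have crI2: "cr e2 eI = - ((a + c * mu) * c12)"
    unfolding cr_def eI_def c12_def by (simp add: c1 algebra_simps)
  have p1: "norm e1 * Xa \<le> \<bar>cr e1 eI\<bar>"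
  proof -
    have "norm e1 * Xa \<le> \<bar>cr e1 (e3 - e1)\<bar> * norm (e2 - e1) + \<bar>cr e1 (e2 - e1)\<bar> * norm (e3 - e1)"
      unfolding Xa_def by (rule ptolemy)
    moreover have "cr e1 (e3 - e1) = nu * c12" "cr e1 (e2 - e1) = c12"
      unfolding cr_def c12_def by (simp_all add: c1 algebra_simps)
    ultimately have "norm e1 * Xa \<le> nu * \<bar>c12\<bar> * c + \<bar>c12\<bar> * b"
      using nu by (simp add: abs_mult c_def b_def)
    moreover have "\<bar>cr e1 eI\<bar> = (b + c * nu) * \<bar>c12\<bar>" using crI1 abc nu by (simp add: abs_mult)
    ultimately show ?thesis by (simp add: algebra_simps)
  qed
  have p2: "norm e2 * Xa \<le> \<bar>cr e2 eI\<bar>"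
  proof -
    have "norm e2 * \<bar>cr (e1 - e2) (e3 - e2)\<bar> \<le> \<bar>cr e2 (e3 - e2)\<bar> * norm (e1 - e2) + \<bar>cr e2 (e1 - e2)\<bar> * norm (e3 - e2)"
      by (rule ptolemy)
    moreover have "cr e2 (e3 - e2) = - (mu * c12)" "cr e2 (e1 - e2) = - c12"
      unfolding cr_def c12_def by (simp_all add: c1 algebra_simps)
    ultimately have "norm e2 * Xa \<le> mu * \<bar>c12\<bar> * c + \<bar>c12\<bar> * a"
      using mu crB by (simp add: abs_mult c_def a_def Xa_def norm_minus_commute)
    moreover have "\<bar>cr e2 eI\<bar> = (a + c * mu) * \<bar>c12\<bar>" using crI2 abc mu by (simp add: abs_mult)
    ultimately show ?thesis by (simp add: algebra_simps)
  qed
  have nIz: "eI \<noteq> 0"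
  proof
    assume "eI = 0"
    then have "cr e1 eI = 0" by (simp add: cr_def)
    moreover have "norm e1 * Xa > 0" using n1 Xa by simp
    ultimately show False using p1 by simp
  qed
  define t where "t = ds * T / (2 * r)"
  have t0: "t \<ge> 0" using ds0 T r by (simp add: t_def)
  have key: "t * norm eI \<le> Xa"
  proof -
    have "t * norm eI \<le> t * (P * r)" using nI t0 by (rule mult_left_mono)
    also have "\<dots> = ds * T * P / 2" using r by (simp add: t_def field_simps)
    also have "\<dots> \<le> c * T * P / 2" using dsc T Ppos by (simp add: c_def mult_right_mono)
    also have "\<dots> \<le> Xa" using inr by (simp add: P_def algebra_simps)
    finally show ?thesis .
  qed
  have s1: "ns e1 eI \<ge> t"
  proof -
    have "t * (norm e1 * norm eI) \<le> norm e1 * Xa"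
      using mult_left_mono[OF key norm_ge_zero[of e1]] by (simp add: algebra_simps)
    also have "\<dots> \<le> \<bar>cr e1 eI\<bar>" by (rule p1)
    finally show ?thesis using n1 nIz by (simp add: ns_def pos_le_divide_eq)
  qed
  have s2: "ns eI e2 \<ge> t"
  proof -
    have "t * (norm e2 * norm eI) \<le> norm e2 * Xa"
      using mult_left_mono[OF key norm_ge_zero[of e2]] by (simp add: algebra_simps)
    also have "\<dots> \<le> \<bar>cr e2 eI\<bar>" by (rule p2)
    also have "\<dots> = \<bar>cr eI e2\<bar>" using cr_simps(8)[of e2 eI] by simp
    finally show ?thesis using n2 nIz by (simp add: ns_def pos_le_divide_eq mult.commute)
  qed
  have sp: "cr eI e1 * cr eI e2 \<le> 0"
  proof -
    have q1: "cr eI e1 = - ((b + c * nu) * c12)" using crI1 cr_simps(8)[of e1 eI] by simp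
    have q2: "cr eI e2 = (a + c * mu) * c12" using crI2 cr_simps(8)[of e2 eI] by simp
    have "cr eI e1 * cr eI e2 = - ((b + c * nu) * (a + c * mu) * c12^2)"
      unfolding q1 q2 by (simp add: power2_eq_square algebra_simps)
    moreover have "0 \<le> (b + c * nu) * (a + c * mu) * c12^2" using abc mu nu by simp
    ultimately show ?thesis by linarith
  qed
  have "nc e1 e2 = nc e1 eI * nc eI e2 - ns e1 eI * ns eI e2"
    using n1 n2 nIz sp by (rule nc_split)
  also have "\<dots> \<le> 1 - 2 * t^2"
    using final_alg[OF nc_ns[OF n1 nIz] nc_ns[OF nIz n2] s1 s2 t0] .
  finally show ?thesis by (simp add: t_def)
qed


lemma sup_alg:
  fixes c1 c2 s1 s2 K :: real
  assumes c1: "c1 > K" and c2: "c2 > K" and K: "K \<ge> 1/2" "K \<le> 1"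
    and e1: "c1^2 + s1^2 = 1" and e2: "c2^2 + s2^2 = 1" and s: "s1 \<ge> 0" "s2 \<ge> 0"
  shows "c1 * c2 - s1 * s2 \<ge> - K"
proof -
  have "K^2 \<le> c1^2" using c1 K by (intro power_mono) auto
  then have a1: "s1^2 \<le> 1 - K^2" using e1 by linarith
  have "K^2 \<le> c2^2" using c2 K by (intro power_mono) auto
  then have a2: "s2^2 \<le> 1 - K^2" using e2 by linarith
  have "0 \<le> 1 - K^2" using K by (simp add: power_le_one)
  have "(s1 * s2)^2 \<le> (1 - K^2)^2" unfolding power_mult_distrib power2_eq_square[of "1 - K^2"]
    using a1 a2 \<open>0 \<le> 1 - K^2\<close> by (intro mult_mono) auto
  then have b: "s1 * s2 \<le> 1 - K^2" using \<open>0 \<le> 1 - K^2\<close> by (rule power2_le_imp_le)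
  have c: "K * K \<le> c1 * c2" using c1 c2 K by (intro mult_mono) auto
  have "0 \<le> (2 * K - 1) * (K + 1)" using K by simp
  then show ?thesis using b c by (simp add: power2_eq_square algebra_simps)
qed

lemma mid:
  fixes e1 e2 :: "real^2" and mu nu r ds k T :: real
  defines "e3 \<equiv> mu *\<^sub>R e1 + nu *\<^sub>R e2"
  defines "t \<equiv> ds * T / (2 * r)"
  defines "K \<equiv> (1 - t^2) / (1 + t^2)"
  assumes n1: "e1 \<noteq> 0" and n2: "e2 \<noteq> 0" and n3: "e3 \<noteq> 0" and mu: "mu \<ge> 0" and nu: "nu \<ge> 0"
    and X: "cr (e2 - e1) (e3 - e1) \<noteq> 0"
    and r1: "norm e1 \<le> r" and r2: "norm e2 \<le> r" and r3: "norm e3 \<le> r"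
    and ds0: "0 \<le> ds" and dsc: "ds \<le> norm (e2 - e1)" and dsr: "ds \<le> 2 * r"
    and angA: "(e2 - e1) \<bullet> (e3 - e1) \<le> k * (norm (e2 - e1) * norm (e3 - e1))"
    and angB: "(e1 - e2) \<bullet> (e3 - e2) \<le> k * (norm (e1 - e2) * norm (e3 - e2))"
    and T: "T \<ge> 0" and Tk: "T^2 * (1 + k) = 1 - k" and k: "k \<ge> 1/2" and r: "r > 0"
  shows "\<bar>nc e1 e2\<bar> \<le> K \<or> \<bar>nc e1 e3\<bar> \<le> K \<or> \<bar>nc e2 e3\<bar> \<le> K"
proof -
  have t0: "t \<ge> 0" using ds0 T r by (simp add: t_def)
  have tT: "t \<le> T"
  proof -
    have "ds * T \<le> 2 * r * T" using dsr T by (rule mult_right_mono)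
    then show ?thesis using r by (simp add: t_def divide_le_eq mult.commute)
  qed
  have tp: "1 + t^2 > 0" by (simp add: add_pos_nonneg)
  have Kdef: "K * (1 + t^2) = 1 - t^2" using tp by (simp add: K_def)
  have "t^2 \<le> T^2" using t0 tT by (intro power_mono) auto
  then have "0 \<le> (1 + k) * (T^2 - t^2)" using k by simp
  then have "k * (1 + t^2) \<le> K * (1 + t^2)" unfolding Kdef using Tk by (simp add: algebra_simps)
  then have kK: "k \<le> K" using tp by simp
  have t4: "0 \<le> t * (t * (t * t))" using t0 by simp
  have "(1 - 2 * t^2) * (1 + t^2) \<le> K * (1 + t^2)" unfolding Kdef
    using t4 by (simp add: algebra_simps power2_eq_square)
  then have K2: "1 - 2 * t^2 \<le> K" using tp by simp
  have "K * (1 + t^2) \<le> 1 * (1 + t^2)" using Kdef by simp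
  then have K1: "K \<le> 1" using tp by (simp only: mult_le_cancel_right_pos)
  have iii': "nc e1 e2 \<le> 1 - 2 * t^2"
    unfolding t_def e3_def using iii[of e1 e2 mu nu r ds k T] assms(4-) k by (simp add: e3_def)
  show ?thesis
  proof (cases "nc e1 e2 \<ge> - K")
    case True
    then show ?thesis using iii' K2 by auto
  next
    case False
    have "e2 - e1 \<noteq> 0" "e3 - e1 \<noteq> 0" using X by (auto simp: cr_def)
    then have nzA: "norm (e2 - e1) * norm (e3 - e1) > 0" by simp
    have A: "- k \<le> nc e1 e3"
    proof -
      have "- (((e2 - e1) \<bullet> (e3 - e1)) / (norm (e2 - e1) * norm (e3 - e1))) \<le> nc e1 e3"
        unfolding e3_def using ii[of e1 mu nu e2] n1 n3 mu nu X by (simp add: e3_def)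
      moreover have "((e2 - e1) \<bullet> (e3 - e1)) / (norm (e2 - e1) * norm (e3 - e1)) \<le> k"
        using angA nzA by (simp add: divide_le_eq)
      ultimately show ?thesis by linarith
    qed
    have e3': "e3 = nu *\<^sub>R e2 + mu *\<^sub>R e1" by (simp add: e3_def add.commute)
    have XB: "cr (e1 - e2) (e3 - e2) \<noteq> 0" using X by (simp add: cr_def algebra_simps)
    have "e1 - e2 \<noteq> 0" "e3 - e2 \<noteq> 0" using XB by (auto simp: cr_def)
    then have nzB: "norm (e1 - e2) * norm (e3 - e2) > 0" by simp
    have B: "- k \<le> nc e2 e3"
    proof -
      have "- (((e1 - e2) \<bullet> (e3 - e2)) / (norm (e1 - e2) * norm (e3 - e2))) \<le> nc e2 e3"
        using ii[of e2 nu mu e1] n2 n3 mu nu XB unfolding e3'[symmetric] by simp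
      moreover have "((e1 - e2) \<bullet> (e3 - e2)) / (norm (e1 - e2) * norm (e3 - e2)) \<le> k"
        using angB nzB by (simp add: divide_le_eq)
      ultimately show ?thesis by linarith
    qed
    have "\<not> (nc e1 e3 > K \<and> nc e3 e2 > K)"
    proof
      assume h: "nc e1 e3 > K \<and> nc e3 e2 > K"
      have sp: "cr e3 e1 * cr e3 e2 \<le> 0"
      proof -
        have "cr e3 e1 * cr e3 e2 = - (mu * nu * (cr e1 e2)^2)"
          unfolding e3_def cr_def by (simp add: power2_eq_square algebra_simps)
        moreover have "0 \<le> mu * nu * (cr e1 e2)^2" using mu nu by simp
        ultimately show ?thesis by linarith
      qed
      have "nc e1 e2 = nc e1 e3 * nc e3 e2 - ns e1 e3 * ns e3 e2"
        using n1 n2 n3 sp by (rule nc_split)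
      also have "\<dots> \<ge> - K"
        using h kK k K1 by (intro sup_alg nc_ns n1 n2 n3 ns_nonneg) auto
      finally show False using False by simp
    qed
    then show ?thesis using A B kK by (auto simp: nc_commute[of e3 e2])
  qed
qed


lemma dev_bound:
  fixes x :: real and u v :: "real^2"
  assumes x: "0 \<le> x" "x \<le> pi/2" and c: "\<bar>nc u v\<bar> \<le> cos x"
  shows "\<bar>pi/2 - vangle u v\<bar> \<le> pi/2 - x"
proof -
  have r: "0 \<le> vangle u v" "vangle u v \<le> pi" by (rule vangle_range)+
  have "cos (vangle u v) \<le> cos x" using c by (simp add: cos_vangle)
  then have "x \<le> vangle u v" using r x by (subst (asm) cos_mono_le_eq) auto
  moreover have "cos (pi - x) \<le> cos (vangle u v)" using c by (simp add: cos_vangle)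
  then have "vangle u v \<le> pi - x" using r x by (subst (asm) cos_mono_le_eq) auto
  ultimately show ?thesis by (simp add: abs_le_iff)
qed

lemma eva_le:
  "\<bar>pi/2 - eva U Qi Qj Qk\<bar> \<le> \<bar>pi/2 - angle3 Qi U Qj\<bar>"
  "\<bar>pi/2 - eva U Qi Qj Qk\<bar> \<le> \<bar>pi/2 - angle3 Qi U Qk\<bar>"
  "\<bar>pi/2 - eva U Qi Qj Qk\<bar> \<le> \<bar>pi/2 - angle3 Qj U Qk\<bar>"
  unfolding eva_def Let_def by auto

lemma eva_bound:
  fixes x :: real
  assumes x: "0 \<le> x" "x \<le> pi/2"
    and c: "\<bar>nc (Qi - U) (Qj - U)\<bar> \<le> cos x \<or> \<bar>nc (Qi - U) (Qk - U)\<bar> \<le> cos x \<or> \<bar>nc (Qj - U) (Qk - U)\<bar> \<le> cos x"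
  shows "\<bar>pi/2 - eva U Qi Qj Qk\<bar> \<le> pi/2 - x"
  using c dev_bound[OF x] eva_le[of U Qi Qj Qk] unfolding angle3_def by (meson order_trans)

lemma cr_collinear:
  assumes "cr (B - A) (C - A) = 0" shows "collinear {A, B, C}"
proof (cases "A = C")
  case True then show ?thesis by (simp add: collinear_3_expand)
next
  case False
  define d where "d = A - C"
  define w where "w = B - C"
  have d0: "d$1^2 + d$2^2 \<noteq> 0"
  proof
    assume "d$1^2 + d$2^2 = 0"
    then have "d$1 = 0" "d$2 = 0" by (simp_all add: add_nonneg_eq_0_iff)
    then have "d = 0" by (simp add: vec_eq_iff forall_2)
    then show False using False by (simp add: d_def)
  qed
  have c0: "w$1 * d$2 - w$2 * d$1 = 0" using assms unfolding d_def w_def cr_def by (simp add: algebra_simps)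
  define u where "u = (w$1 * d$1 + w$2 * d$2) / (d$1^2 + d$2^2)"
  have "w = u *\<^sub>R d"
  proof -
    have "w$1 * (d$1^2 + d$2^2) = (w$1 * d$1 + w$2 * d$2) * d$1"
      using c0 by (simp add: power2_eq_square algebra_simps)
    moreover have "w$2 * (d$1^2 + d$2^2) = (w$1 * d$1 + w$2 * d$2) * d$2"
      using c0 by (simp add: power2_eq_square algebra_simps)
    ultimately show ?thesis using d0 unfolding u_def by (simp add: vec_eq_iff forall_2 field_simps)
  qed
  then have "B = u *\<^sub>R A + (1 - u) *\<^sub>R C" unfolding w_def d_def by (simp add: algebra_simps)
  then show ?thesis by (auto simp: collinear_3_expand)
qed

lemma mid_pts:
  fixes A B C U :: "real^2" and mu nu r ds k T :: real
  assumes nA: "A \<noteq> U" and nB: "B \<noteq> U" and nC: "C \<noteq> U" and X: "cr (B - A) (C - A) \<noteq> 0"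
    and cone: "C - U = mu *\<^sub>R (A - U) + nu *\<^sub>R (B - U)" and mu: "mu \<ge> 0" and nu: "nu \<ge> 0"
    and rA: "dist U A \<le> r" and rB: "dist U B \<le> r" and rC: "dist U C \<le> r"
    and ds0: "0 \<le> ds" and dsc: "ds \<le> dist A B" and dsr: "ds \<le> 2 * r"
    and angA: "nc (B - A) (C - A) \<le> k" and angB: "nc (A - B) (C - B) \<le> k"
    and T: "T \<ge> 0" and Tk: "T^2 * (1 + k) = 1 - k" and k: "k \<ge> 1/2" and r: "r > 0"
  shows "\<bar>nc (A - U) (B - U)\<bar> \<le> (1 - (ds * T / (2 * r))^2) / (1 + (ds * T / (2 * r))^2)
    \<or> \<bar>nc (A - U) (C - U)\<bar> \<le> (1 - (ds * T / (2 * r))^2) / (1 + (ds * T / (2 * r))^2)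
    \<or> \<bar>nc (B - U) (C - U)\<bar> \<le> (1 - (ds * T / (2 * r))^2) / (1 + (ds * T / (2 * r))^2)"
proof -
  have d1: "(B - U) - (A - U) = B - A" "C - U - (A - U) = C - A" "A - U - (B - U) = A - B" "C - U - (B - U) = C - B"
    by simp_all
  have XA: "B - A \<noteq> 0" "C - A \<noteq> 0" using X by (auto simp: cr_def)
  have XB: "cr (A - B) (C - B) \<noteq> 0" using X by (simp add: cr_def algebra_simps)
  then have XB': "A - B \<noteq> 0" "C - B \<noteq> 0" by (auto simp: cr_def)
  have aA: "(B - A) \<bullet> (C - A) \<le> k * (norm (B - A) * norm (C - A))"
    using angA XA by (simp add: nc_def divide_le_eq)
  have aB: "(A - B) \<bullet> (C - B) \<le> k * (norm (A - B) * norm (C - B))"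
    using angB XB' by (simp add: nc_def divide_le_eq)
  show ?thesis
    using mid[of "A - U" "B - U" mu nu r ds k T] cone[symmetric] d1 nA nB nC mu nu X
      rA rB rC ds0 dsc dsr aA aB T Tk k r
    by (simp add: dist_norm norm_minus_commute)
qed


lemma cone_of:
  fixes A B C U :: "real^2" and a b c :: real
  assumes z: "a *\<^sub>R (A - U) + b *\<^sub>R (B - U) + c *\<^sub>R (C - U) = 0" and s: "a + b + c = 1"
    and sg: "(c < 0 \<and> a \<ge> 0 \<and> b \<ge> 0) \<or> (a < 0 \<and> b < 0)"
  shows "C - U = (- a / c) *\<^sub>R (A - U) + (- b / c) *\<^sub>R (B - U) \<and> - a / c \<ge> 0 \<and> - b / c \<ge> 0"
proof -
  have c0: "c \<noteq> 0" using sg s by auto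
  have "c *\<^sub>R (C - U) = (a *\<^sub>R (A - U) + b *\<^sub>R (B - U) + c *\<^sub>R (C - U)) - (a *\<^sub>R (A - U) + b *\<^sub>R (B - U))"
    by simp
  then have "c *\<^sub>R (C - U) = - (a *\<^sub>R (A - U) + b *\<^sub>R (B - U))" unfolding z by simp
  then have "C - U = (1 / c) *\<^sub>R (- (a *\<^sub>R (A - U) + b *\<^sub>R (B - U)))"
    using c0 by (metis (no_types, lifting) divide_self_if scaleR_one scaleR_scaleR times_divide_eq_left mult.commute)
  then have "C - U = (- a / c) *\<^sub>R (A - U) + (- b / c) *\<^sub>R (B - U)"
    by (simp add: scaleR_add_right scaleR_diff_right scaleR_scaleR divide_inverse mult.commute)
  moreover have "- a / c \<ge> 0 \<and> - b / c \<ge> 0"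
  proof (cases "c < 0")
    case True
    then show ?thesis using sg s by (auto simp: divide_nonneg_neg)
  next
    case False
    then have "c > 0" using sg s by auto
    then show ?thesis using sg False by (auto simp: divide_nonpos_pos)
  qed
  ultimately show ?thesis by blast
qed

lemma out_gen:
  fixes A B C U :: "real^2" and a b c r ds k T :: real
  assumes nA: "A \<noteq> U" and nB: "B \<noteq> U" and nC: "C \<noteq> U" and X: "cr (B - A) (C - A) \<noteq> 0"
    and z: "a *\<^sub>R (A - U) + b *\<^sub>R (B - U) + c *\<^sub>R (C - U) = 0" and s: "a + b + c = 1"
    and sg: "(c < 0 \<and> a \<ge> 0 \<and> b \<ge> 0) \<or> (a < 0 \<and> b < 0)"
    and rA: "dist U A \<le> r" and rB: "dist U B \<le> r" and rC: "dist U C \<le> r"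
    and ds0: "0 \<le> ds" and dsc: "ds \<le> dist A B" and dsr: "ds \<le> 2 * r"
    and angA: "nc (B - A) (C - A) \<le> k" and angB: "nc (A - B) (C - B) \<le> k"
    and T: "T \<ge> 0" and Tk: "T^2 * (1 + k) = 1 - k" and k: "k \<ge> 1/2" and r: "r > 0"
  shows "\<bar>nc (A - U) (B - U)\<bar> \<le> (1 - (ds * T / (2 * r))^2) / (1 + (ds * T / (2 * r))^2)
    \<or> \<bar>nc (A - U) (C - U)\<bar> \<le> (1 - (ds * T / (2 * r))^2) / (1 + (ds * T / (2 * r))^2)
    \<or> \<bar>nc (B - U) (C - U)\<bar> \<le> (1 - (ds * T / (2 * r))^2) / (1 + (ds * T / (2 * r))^2)"
proof -
  have h: "C - U = (- a / c) *\<^sub>R (A - U) + (- b / c) *\<^sub>R (B - U) \<and> - a / c \<ge> 0 \<and> - b / c \<ge> 0"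
    by (rule cone_of[OF z s sg])
  show ?thesis
    by (rule mid_pts[OF nA nB nC X h[THEN conjunct1] h[THEN conjunct2, THEN conjunct1]
        h[THEN conjunct2, THEN conjunct2] rA rB rC ds0 dsc dsr angA angB T Tk k r])
qed

lemma bary:
  fixes A B C U :: "real^2"
  assumes D: "cr (B - A) (C - A) \<noteq> 0"
  defines "al \<equiv> cr (B - U) (C - U) / cr (B - A) (C - A)"
    and "be \<equiv> cr (C - U) (A - U) / cr (B - A) (C - A)"
    and "ga \<equiv> cr (A - U) (B - U) / cr (B - A) (C - A)"
  shows "al + be + ga = 1" "al *\<^sub>R (A - U) + be *\<^sub>R (B - U) + ga *\<^sub>R (C - U) = 0"
    "U = al *\<^sub>R A + be *\<^sub>R B + ga *\<^sub>R C"
proof -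
  have i1: "cr (B - U) (C - U) + cr (C - U) (A - U) + cr (A - U) (B - U) = cr (B - A) (C - A)"
    by (simp add: cr_def algebra_simps)
  show s: "al + be + ga = 1" using D i1 unfolding al_def be_def ga_def by (simp add: add_divide_distrib[symmetric])
  have i2: "cr (B - U) (C - U) *\<^sub>R (A - U) + cr (C - U) (A - U) *\<^sub>R (B - U) + cr (A - U) (B - U) *\<^sub>R (C - U) = 0"
    by (simp add: vec_eq_iff forall_2 cr_def algebra_simps)
  have "(1 / cr (B - A) (C - A)) *\<^sub>R (cr (B - U) (C - U) *\<^sub>R (A - U) + cr (C - U) (A - U) *\<^sub>R (B - U) + cr (A - U) (B - U) *\<^sub>R (C - U)) = 0"
    using i2 by simp
  then show z: "al *\<^sub>R (A - U) + be *\<^sub>R (B - U) + ga *\<^sub>R (C - U) = 0"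
    unfolding al_def be_def ga_def by (simp add: scaleR_add_right)
  have "al *\<^sub>R A + be *\<^sub>R B + ga *\<^sub>R C = (al *\<^sub>R (A - U) + be *\<^sub>R (B - U) + ga *\<^sub>R (C - U)) + (al + be + ga) *\<^sub>R U"
    by (simp add: algebra_simps)
  then show "U = al *\<^sub>R A + be *\<^sub>R B + ga *\<^sub>R C" using z s by simp
qed


lemma angle_cos:
  assumes "ths \<le> angle3 A B C" "0 \<le> ths" "ths \<le> pi"
  shows "nc (A - B) (C - B) \<le> cos ths"
proof -
  have "cos (angle3 A B C) \<le> cos ths"
    using assms vangle_range[of "A - B" "C - B"] unfolding angle3_def
    by (subst cos_mono_le_eq) auto
  then show ?thesis by (simp add: angle3_def cos_vangle)
qed

theorem theorem1:
  fixes r ds ths :: real and Qi Qj Qk U :: "real^2"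
  assumes "r > 0"
    and "0 \<le> ds" "ds \<le> 2 * r"
    and "0 \<le> ths" "ths \<le> pi / 3"
    and "ref_triplet ds ths Qi Qj Qk"
    and "U \<notin> {Qi, Qj, Qk}"
    and "dist U Qi \<le> r" "dist U Qj \<le> r" "dist U Qk \<le> r"
  shows "(U \<in> convex hull {Qi, Qj, Qk} \<longrightarrow>
            \<bar>pi / 2 - eva U Qi Qj Qk\<bar> \<le> pi / 2 - ths) \<and>
         (U \<notin> convex hull {Qi, Qj, Qk} \<longrightarrow>
            \<bar>pi / 2 - eva U Qi Qj Qk\<bar> \<le> pi / 2 - 2 * arctan (ds / (2 * r) * tan (ths / 2)))"
proof -
  note r = assms(1) and ds0 = assms(2) and dsr = assms(3) and th0 = assms(4) and th3 = assms(5)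
  note rI = assms(8) and rJ = assms(9) and rK = assms(10)
  have ncol: "\<not> collinear {Qi, Qj, Qk}" and dIJ: "ds \<le> dist Qi Qj" and dIK: "ds \<le> dist Qi Qk"
    and dJK: "ds \<le> dist Qj Qk" and tI: "ths \<le> angle3 Qj Qi Qk" and tJ: "ths \<le> angle3 Qi Qj Qk"
    and tK: "ths \<le> angle3 Qi Qk Qj"
    using assms(6) unfolding ref_triplet_def by auto
  have nU: "Qi \<noteq> U" "Qj \<noteq> U" "Qk \<noteq> U" using assms(7) by auto
  have X: "cr (Qj - Qi) (Qk - Qi) \<noteq> 0" using ncol cr_collinear by blast
  have thpi: "ths \<le> pi" using th3 pi_gt_zero by linarith
  define k where "k = cos ths"
  have aI: "nc (Qj - Qi) (Qk - Qi) \<le> k" unfolding k_def using angle_cos[OF tI th0 thpi] .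
  have aJ: "nc (Qi - Qj) (Qk - Qj) \<le> k" unfolding k_def using angle_cos[OF tJ th0 thpi] .
  have aK: "nc (Qi - Qk) (Qj - Qk) \<le> k" unfolding k_def using angle_cos[OF tK th0 thpi] .
  have k12: "k \<ge> 1/2"
  proof -
    have "cos (pi/3) \<le> cos ths" using th0 th3 by (subst cos_mono_le_eq) auto
    then show ?thesis by (simp add: k_def cos_60)
  qed
  have thp2: "ths \<le> pi/2" using th3 th0 by linarith
  have part1: "U \<in> convex hull {Qi, Qj, Qk} \<longrightarrow> \<bar>pi / 2 - eva U Qi Qj Qk\<bar> \<le> pi / 2 - ths"
  proof
    assume "U \<in> convex hull {Qi, Qj, Qk}"
    then obtain al be ga where pos: "0 \<le> al" "0 \<le> be" "0 \<le> ga" and s: "al + be + ga = 1"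
      and U: "U = al *\<^sub>R Qi + be *\<^sub>R Qj + ga *\<^sub>R Qk"
      unfolding convex_hull_3 by auto
    have X1: "cr (Qi - Qk) (Qj - Qk) \<noteq> 0" using X by (simp add: cr_def algebra_simps)
    have X2: "cr (Qi - Qj) (Qk - Qj) \<noteq> 0" using X by (simp add: cr_def algebra_simps)
    have X3: "cr (Qj - Qi) (Qk - Qi) \<noteq> 0" using X by simp
    have h1: "nc (Qi - U) (Qj - U) \<le> k"
      using ins[OF X1 pos s U] nU aK by simp
    have h2: "nc (Qi - U) (Qk - U) \<le> k"
    proof -
      have "U = al *\<^sub>R Qi + ga *\<^sub>R Qk + be *\<^sub>R Qj" using U by (simp add: algebra_simps)
      moreover have "al + ga + be = 1" using s by simp
      ultimately show ?thesis using ins[where A=Qi and B=Qk and C=Qj and U=U and al=al and be=ga and ga=be] X2 pos nU aJ by simp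
    qed
    have h3: "nc (Qj - U) (Qk - U) \<le> k"
    proof -
      have "U = be *\<^sub>R Qj + ga *\<^sub>R Qk + al *\<^sub>R Qi" using U by (simp add: algebra_simps)
      moreover have "be + ga + al = 1" using s by simp
      ultimately show ?thesis using ins[where A=Qj and B=Qk and C=Qi and U=U and al=be and be=ga and ga=al] X3 pos nU aI by simp
    qed
    have "nc (Qi - U) (Qj - U) + nc (Qi - U) (Qk - U) + nc (Qj - U) (Qk - U) \<ge> -3/2"
      using nU by (intro sum_nc) auto
    then have "\<bar>nc (Qi - U) (Qj - U)\<bar> \<le> cos ths \<or> \<bar>nc (Qi - U) (Qk - U)\<bar> \<le> cos ths \<or> \<bar>nc (Qj - U) (Qk - U)\<bar> \<le> cos ths"
      using h1 h2 h3 k12 unfolding k_def by linarith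
    then show "\<bar>pi / 2 - eva U Qi Qj Qk\<bar> \<le> pi / 2 - ths"
      using th0 thp2 by (intro eva_bound) auto
  qed
  have part2: "U \<notin> convex hull {Qi, Qj, Qk} \<longrightarrow>
            \<bar>pi / 2 - eva U Qi Qj Qk\<bar> \<le> pi / 2 - 2 * arctan (ds / (2 * r) * tan (ths / 2))"
  proof
    assume out: "U \<notin> convex hull {Qi, Qj, Qk}"
    define T where "T = tan (ths / 2)"
    have Tsin: "T = sin ths / (k + 1)" using tan_half[of "ths/2"] by (simp add: T_def k_def)
    have kp: "k + 1 > 0" using k12 by simp
    have T0: "T \<ge> 0" using Tsin kp sin_ge_zero[OF th0 thpi] by simp
    have Tk: "T^2 * (1 + k) = 1 - k"
    proof -
      have "T^2 * (1 + k) = (sin ths)^2 / (k + 1)^2 * (k + 1)" by (simp add: Tsin power_divide add.commute)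
      also have "\<dots> = (sin ths)^2 / (k + 1)" using kp by (simp add: power2_eq_square)
      also have "\<dots> = (1 - k^2) / (k + 1)" by (simp add: k_def sin_squared_eq)
      also have "\<dots> = 1 - k" using kp by (simp add: power2_eq_square field_simps)
      finally show ?thesis .
    qed
    define t where "t = ds / (2 * r) * tan (ths / 2)"
    have tt: "ds * T / (2 * r) = t" by (simp add: t_def T_def)
    define K where "K = (1 - t^2) / (1 + t^2)"
    have t0: "t \<ge> 0" using ds0 r T0 by (simp add: t_def T_def[symmetric])
    have tT: "t \<le> T"
    proof -
      have "ds * T \<le> 2 * r * T" using dsr T0 by (rule mult_right_mono)
      then show ?thesis using r by (simp add: tt[symmetric] divide_le_eq mult.commute)
    qed
    have cosK: "cos (2 * arctan t) = K"
    proof -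
      have sq: "sqrt (1 + t^2)^2 = 1 + t^2" by (simp add: add_nonneg_nonneg)
      have "cos (2 * arctan t) = (cos (arctan t))^2 - (sin (arctan t))^2" by (rule cos_double)
      also have "\<dots> = 1 / (1 + t^2) - t^2 / (1 + t^2)"
        by (simp add: cos_arctan sin_arctan power_divide sq)
      finally show ?thesis by (simp add: K_def diff_divide_distrib)
    qed
    have x0: "0 \<le> 2 * arctan t" using t0 by simp
    have "arctan t \<le> arctan T" using tT by (simp add: arctan_le_iff)
    also have "arctan T = ths / 2" unfolding T_def using th0 th3 pi_gt_zero by (intro arctan_tan) linarith+
    finally have x2: "2 * arctan t \<le> pi / 2" using th3 th0 by linarith
    define al be ga where "al = cr (Qj - U) (Qk - U) / cr (Qj - Qi) (Qk - Qi)"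
      and "be = cr (Qk - U) (Qi - U) / cr (Qj - Qi) (Qk - Qi)"
      and "ga = cr (Qi - U) (Qj - U) / cr (Qj - Qi) (Qk - Qi)"
    have s: "al + be + ga = 1" and z: "al *\<^sub>R (Qi - U) + be *\<^sub>R (Qj - U) + ga *\<^sub>R (Qk - U) = 0"
      and Ueq: "U = al *\<^sub>R Qi + be *\<^sub>R Qj + ga *\<^sub>R Qk"
      using bary[OF X, of U] unfolding al_def be_def ga_def by auto
    have neg: "al < 0 \<or> be < 0 \<or> ga < 0"
    proof (rule ccontr)
      assume "\<not> (al < 0 \<or> be < 0 \<or> ga < 0)"
      then have "\<exists>u v w. U = u *\<^sub>R Qi + v *\<^sub>R Qj + w *\<^sub>R Qk \<and> 0 \<le> u \<and> 0 \<le> v \<and> 0 \<le> w \<and> u + v + w = 1"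
        using s Ueq by (intro exI[of _ al] exI[of _ be] exI[of _ ga]) auto
      then have "U \<in> convex hull {Qi, Qj, Qk}" unfolding convex_hull_3 by blast
      then show False using out by simp
    qed
    have XJ: "cr (Qk - Qi) (Qj - Qi) \<noteq> 0" using X by (simp add: cr_def algebra_simps)
    have XI: "cr (Qk - Qj) (Qi - Qj) \<noteq> 0" using X by (simp add: cr_def algebra_simps)
    have disj: "\<bar>nc (Qi - U) (Qj - U)\<bar> \<le> K \<or> \<bar>nc (Qi - U) (Qk - U)\<bar> \<le> K \<or> \<bar>nc (Qj - U) (Qk - U)\<bar> \<le> K"
    proof -
      have case3: ?thesis if "(ga < 0 \<and> al \<ge> 0 \<and> be \<ge> 0) \<or> (al < 0 \<and> be < 0)"
        using out_gen[OF nU(1) nU(2) nU(3) X z s that rI rJ rK ds0 dIJ dsr aI aJ T0 Tk k12 r]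
        unfolding tt K_def[symmetric] .
      have case2: ?thesis if "(be < 0 \<and> al \<ge> 0 \<and> ga \<ge> 0) \<or> (al < 0 \<and> ga < 0)"
      proof -
        have z': "al *\<^sub>R (Qi - U) + ga *\<^sub>R (Qk - U) + be *\<^sub>R (Qj - U) = 0" using z by (simp add: algebra_simps)
        have s': "al + ga + be = 1" using s by simp
        have aI': "nc (Qk - Qi) (Qj - Qi) \<le> k" using aI by (simp add: nc_commute)
        show ?thesis
          using out_gen[OF nU(1) nU(3) nU(2) XJ z' s' that rI rK rJ ds0 dIK dsr aI' aK T0 Tk k12 r]
          unfolding tt K_def[symmetric] by (auto simp: nc_commute)
      qed
      have case1: ?thesis if "(al < 0 \<and> be \<ge> 0 \<and> ga \<ge> 0) \<or> (be < 0 \<and> ga < 0)"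
      proof -
        have z': "be *\<^sub>R (Qj - U) + ga *\<^sub>R (Qk - U) + al *\<^sub>R (Qi - U) = 0" using z by (simp add: algebra_simps)
        have s': "be + ga + al = 1" using s by simp
        have aJ': "nc (Qk - Qj) (Qi - Qj) \<le> k" using aJ by (simp add: nc_commute)
        have aK': "nc (Qj - Qk) (Qi - Qk) \<le> k" using aK by (simp add: nc_commute)
        show ?thesis
          using out_gen[OF nU(2) nU(3) nU(1) XI z' s' that rJ rK rI ds0 dJK dsr aJ' aK' T0 Tk k12 r]
          unfolding tt K_def[symmetric] by (auto simp: nc_commute)
      qed
      show ?thesis using neg case1 case2 case3 by linarith
    qed
    show "\<bar>pi / 2 - eva U Qi Qj Qk\<bar> \<le> pi / 2 - 2 * arctan (ds / (2 * r) * tan (ths / 2))"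
    proof -
      have "\<bar>pi / 2 - eva U Qi Qj Qk\<bar> \<le> pi / 2 - 2 * arctan t"
        using eva_bound[OF x0 x2, of Qi U Qj Qk] disj unfolding cosK by blast
      then show ?thesis by (simp add: t_def)
    qed
  qed
  show ?thesis using part1 part2 by blast
qed

end
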